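(* Let $Q\in\partial D$ and let $v$ be a nonnegative harmonic function with respect to $X^{D}$ with Martin measure $\nu$. Suppose that $\mu$ is a nonnegative finite measure on $\partial D$. If $\displaystyle\lim_{x\rightarrow Q}\frac{\delta_{D}(x)}{v(x)}=0$, then for every $\varepsilon>0$ we have $$ \lim_{x\rightarrow Q}\frac{\int_{\partial D \cap \{|Q-z|\geq \varepsilon\}}M_{D}(x,z)\mu(dz)}{v(x)}=0. $$ If instead we only assume $\displaystyle\lim_{x\rightarrow Q}\frac{\delta_{D}(x)}{v(x)}=0$ as $x\to Q$ nontangentially, then for every $\varepsilon>0$ the conclusion $\displaystyle\lim_{x\rightarrow Q}\frac{\int_{\partial D \cap \{|Q-z|\geq \varepsilon\}}M_{D}(x,z)\mu(dz)}{v(x)}=0$ holds with the limit taken as $x\to Q$ nontangentially.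
   Context: Let $d\geq 2$ and let $X_t=W(S_t)$ be a subordinate Brownian motion, where $W$ is a $d$-dimensional Brownian motion and $S$ is an independent subordinator with Laplace exponent $\phi(\lambda)=\lambda+\int_{(0,\infty)}(1-e^{-\lambda t})\mu(t)\,dt$, where $\phi$ is a complete Bernstein function (the Lévy measure has a completely monotone density $\mu(t)$) and for every $K>0$ there is $c=c(K)>1$ with $\mu(r)\le c\,\mu(2r)$ for $r\in(0,K)$. Let $D\subset\mathbb{R}^d$ be a bounded $C^{1,1}$ open set with characteristics $(r_0,\Lambda_0)$, $X^D$ the process $X$ killed upon exiting $D$, $G_D$ its Green function, and $\delta_D(x)$ the Euclidean distance from $x$ to $D^c$. A function $u:D\to[0,\infty)$ is harmonic with respect to $X^D$ if $u(x)=\mathbb{E}_x[u(X^D_{\tau_B})]$ for every $x\in B$ and every open $B$ with compact closure in $D$ (with $u$ set to $0$ at the cemetery). Fix $x_0\in D$; the Martin kernel is $M_D(x,z)=\lim_{y\to z}G_D(x,y)/G_D(x_0,y)$ for $z\in\partial D$, and every nonnegative harmonic $v$ with respect to $X^D$ has the form $v(x)=\int_{\partial D}M_D(x,z)\nu(dz)$ for a unique finite measure $\nu$ on $\partial D$ (its Martin measure). The Martin kernel satisfies $M_D(x,z)\asymp \delta_D(x)/|x-z|^d$ for $x\in D$, $z\in\partial D$. For $Q\in\partial D$ and $\beta>1$ let $A_Q^\beta=\{x\in D:\delta_D(x)<r_0,\ |x-Q|<\beta\delta_D(x)\}$; $x\to Q$ nontangentially means $x\to Q$ with $x\in A_Q^\beta$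 for some $\beta>1$. *)

theory Defs
  imports "HOL-Probability.Probability"
begin

definition dist_compl :: "'a::euclidean_space set \<Rightarrow> 'a \<Rightarrow> real" where
  "dist_compl D x = infdist x (- D)"

text \<open>For every boundary point Q there is a unit vector e (the d-th axis of the
  local coordinate system CS_Q) and a C^{1,1} function psi, with psi 0 = 0,
  gradient g, g 0 = 0, |g| <= Lambda0 and g Lipschitz with constant Lambda0,
  such that, writing y - Q = w + t e with w orthogonal to e,
  D \<inter> B(Q,r0) = {y \<in> B(Q,r0). t > psi w}.
  (psi is a function on the whole space, only its restriction to the
  hyperplane orthogonal to e matters.)\<close>
definition C11_open_set :: "'a::euclidean_space set \<Rightarrow> real \<Rightarrow> real \<Rightarrow> bool" where
  "C11_open_set D r0 \<Lambda>0 \<longleftrightarrow> open D \<and> r0 > 0 \<and> \<Lambda>0 > 0 \<and>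
     (\<forall>Q\<in>frontier D. \<exists>e (\<psi>::'a \<Rightarrow> real) g.
        norm e = 1 \<and> \<psi> 0 = 0 \<and> g 0 = 0 \<and>
        (\<forall>w. (\<psi> has_derivative (\<lambda>h. g w \<bullet> h)) (at w)) \<and>
        (\<forall>w. norm (g w) \<le> \<Lambda>0) \<and>
        (\<forall>w u. norm (g w - g u) \<le> \<Lambda>0 * norm (w - u)) \<and>
        D \<inter> ball Q r0 =
          {y \<in> ball Q r0. (y - Q) \<bullet> e > \<psi> ((y - Q) - ((y - Q) \<bullet> e) *\<^sub>R e)})"

definition nt_region :: "'a::euclidean_space set \<Rightarrow> real \<Rightarrow> 'a \<Rightarrow> real \<Rightarrow> 'a set" where
  "nt_region D r0 Q \<beta> = {x \<in> D. dist_compl D x < r0 \<and> dist x Q < \<beta> * dist_compl D x}"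

definition martin_kernel_estimate :: "'a::euclidean_space set \<Rightarrow> ('a \<Rightarrow> 'a \<Rightarrow> real) \<Rightarrow> bool" where
  "martin_kernel_estimate D M \<longleftrightarrow> (\<exists>C\<ge>1. \<forall>x\<in>D. \<forall>z\<in>frontier D.
      dist_compl D x / (C * dist x z ^ DIM('a)) \<le> M x z \<and>
      M x z \<le> C * dist_compl D x / dist x z ^ DIM('a))"

end

theory Submission
  imports Defs
begin

lemma key:
  fixes D :: "'a::euclidean_space set"
    and M :: "'a \<Rightarrow> 'a \<Rightarrow> real"
    and v :: "'a \<Rightarrow> real"
    and \<nu> \<mu> :: "'a measure"
  assumes Mest: "martin_kernel_estimate D M"
    and Mmeas_mu: "\<forall>x\<in>D. M x \<in> borel_measurable \<mu>"
    and nu: "space \<nu> = frontier D"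
    and v: "\<forall>x\<in>D. v x = (\<integral>z. M x z \<partial>\<nu>)"
    and mu: "finite_measure \<mu>" "space \<mu> = frontier D"
    and musets: "sets \<mu> = sets (restrict_space borel (frontier D))"
    and SD: "S \<subseteq> D" and eps: "\<epsilon> > 0"
    and hyp: "((\<lambda>x. dist_compl D x / v x) \<longlongrightarrow> 0) (at Q within S)"
  shows "((\<lambda>x. (\<integral>z. indicator {z. \<epsilon> \<le> dist Q z} z * M x z \<partial>\<mu>) / v x)
                  \<longlongrightarrow> 0) (at Q within S)"
proof -
  obtain C where C: "C \<ge> 1" and CM: "\<forall>x\<in>D. \<forall>z\<in>frontier D.
      dist_compl D x / (C * dist x z ^ DIM('a)) \<le> M x z \<and>
      M x z \<le> C * dist_compl D x / dist x z ^ DIM('a)"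
    using Mest unfolding martin_kernel_estimate_def by blast
  define m where "m = measure \<mu> (space \<mu>)"
  have m0: "m \<ge> 0" unfolding m_def by simp
  define K where "K = C / (\<epsilon>/2) ^ DIM('a) * m"
  have K0: "K \<ge> 0" unfolding K_def using C eps m0 by simp
  have ev: "eventually (\<lambda>x. x \<in> S \<and> dist x Q < \<epsilon>/2) (at Q within S)"
    using eps by (auto simp: eventually_at intro!: exI[of _ "\<epsilon>/2"] simp: dist_commute)
  have "eventually (\<lambda>x. norm ((\<integral>z. indicator {z. \<epsilon> \<le> dist Q z} z * M x z \<partial>\<mu>) / v x)
           \<le> K * (dist_compl D x / v x)) (at Q within S)"
    using ev
  proof (rule eventually_mono)
    fix x assume x: "x \<in> S \<and> dist x Q < \<epsilon>/2"
    hence xD: "x \<in> D" using SD by auto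
    have d0: "dist_compl D x \<ge> 0" unfolding dist_compl_def by (simp add: infdist_nonneg)
    have Mnn: "\<And>z. z \<in> frontier D \<Longrightarrow> 0 \<le> M x z"
    proof -
      fix z assume z: "z \<in> frontier D"
      have "dist_compl D x / (C * dist x z ^ DIM('a)) \<le> M x z" using CM xD z by blast
      moreover have "0 \<le> dist_compl D x / (C * dist x z ^ DIM('a))"
        using d0 C by simp
      ultimately show "0 \<le> M x z" by linarith
    qed
    have v0: "v x \<ge> 0" using v xD nu Mnn Bochner_Integration.integral_nonneg[of \<nu> "M x"] by simp
    define B where "B = C * dist_compl D x / (\<epsilon>/2) ^ DIM('a)"
    have bnd: "\<And>z. z \<in> space \<mu> \<Longrightarrow> norm (indicator {z. \<epsilon> \<le> dist Q z} z * M x z) \<le> B"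
    proof -
      fix z assume z: "z \<in> space \<mu>"
      hence zf: "z \<in> frontier D" using mu by simp
      show "norm (indicator {z. \<epsilon> \<le> dist Q z} z * M x z) \<le> B"
      proof (cases "\<epsilon> \<le> dist Q z")
        case True
        have "dist Q z \<le> dist Q x + dist x z" by (rule dist_triangle)
        hence dxz: "dist x z \<ge> \<epsilon>/2" using True x by (simp add: dist_commute)
        have "M x z \<le> C * dist_compl D x / dist x z ^ DIM('a)" using CM xD zf by blast
        also have "\<dots> \<le> B" unfolding B_def
        proof (rule divide_left_mono)
          have "0 < dist x z" using dxz eps by linarith
          thus "0 < dist x z ^ DIM('a) * (\<epsilon> / 2) ^ DIM('a)" using eps by simp
        qed (use dxz eps C d0 in \<open>auto intro: power_mono\<close>)
        finally show ?thesis using True Mnn[OF zf] by simp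
      next
        case False
        have "0 \<le> B" unfolding B_def using C d0 eps by simp
        thus ?thesis using False by simp
      qed
    qed
    have meas: "(\<lambda>z. indicator {z. \<epsilon> \<le> dist Q z} z * M x z) \<in> borel_measurable \<mu>"
    proof -
      have "(\<lambda>z. indicator {z. \<epsilon> \<le> dist Q z} z :: real) \<in> borel_measurable \<mu>"
      proof -
        have "(\<lambda>z. indicator {z. \<epsilon> \<le> dist Q z} z :: real) = (\<lambda>z. if \<epsilon> \<le> dist Q z then 1 else 0)"
          by (auto simp: indicator_def)
        moreover have "(\<lambda>z. if \<epsilon> \<le> dist Q z then 1 else (0::real)) \<in> borel_measurable \<mu>"
        proof -
          have "(\<lambda>z. if \<epsilon> \<le> dist Q z then 1 else (0::real)) \<in> borel_measurable borel"
            by measurable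
          hence "(\<lambda>z. if \<epsilon> \<le> dist Q z then 1 else (0::real)) \<in> borel_measurable (restrict_space borel (frontier D))"
            by (rule measurable_restrict_space1)
          thus ?thesis using measurable_cong_sets[OF musets refl] by blast
        qed
        ultimately show ?thesis by simp
      qed
      thus ?thesis using Mmeas_mu xD by (intro borel_measurable_times) auto
    qed
    have int: "integrable \<mu> (\<lambda>z. indicator {z. \<epsilon> \<le> dist Q z} z * M x z)"
      by (rule finite_measure.integrable_const_bound[OF mu(1), of _ B])
         (use bnd meas in \<open>auto intro!: AE_I2\<close>)
    have "norm (\<integral>z. indicator {z. \<epsilon> \<le> dist Q z} z * M x z \<partial>\<mu>)
          \<le> (\<integral>z. norm (indicator {z. \<epsilon> \<le> dist Q z} z * M x z) \<partial>\<mu>)"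
      by (rule integral_norm_bound)
    also have "\<dots> \<le> (\<integral>z. B \<partial>\<mu>)"
      using int bnd finite_measure.integrable_const[OF mu(1)]
      by (intro integral_mono) auto
    also have "\<dots> = B * m" unfolding m_def by simp
    finally have I: "norm (\<integral>z. indicator {z. \<epsilon> \<le> dist Q z} z * M x z \<partial>\<mu>) \<le> B * m" .
    have "B * m = K * dist_compl D x" unfolding B_def K_def by simp
    show "norm ((\<integral>z. indicator {z. \<epsilon> \<le> dist Q z} z * M x z \<partial>\<mu>) / v x)
           \<le> K * (dist_compl D x / v x)"
    proof (cases "v x = 0")
      case True thus ?thesis by simp
    next
      case False
      hence vp: "v x > 0" using v0 by simp
      have "norm ((\<integral>z. indicator {z. \<epsilon> \<le> dist Q z} z * M x z \<partial>\<mu>) / v x)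
          = norm (\<integral>z. indicator {z. \<epsilon> \<le> dist Q z} z * M x z \<partial>\<mu>) / v x"
        using vp by simp
      also have "\<dots> \<le> K * dist_compl D x / v x"
        using I \<open>B * m = K * dist_compl D x\<close> vp by (simp add: divide_right_mono)
      finally show ?thesis by simp
    qed
  qed
  moreover have "((\<lambda>x. K * (dist_compl D x / v x)) \<longlongrightarrow> 0) (at Q within S)"
    using tendsto_mult_right_zero[OF hyp] by simp
  ultimately show ?thesis by (rule Lim_null_comparison)
qed


theorem lemma3p3:
  fixes D :: "'a::euclidean_space set"
    and r0 \<Lambda>0 :: real
    and M :: "'a \<Rightarrow> 'a \<Rightarrow> real"
    and v :: "'a \<Rightarrow> real"
    and \<nu> \<mu> :: "'a measure"
    and Q :: 'a
  assumes dim: "DIM('a) \<ge> 2"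
    and D: "C11_open_set D r0 \<Lambda>0" "bounded D"
    and Mest: "martin_kernel_estimate D M"
    and Mmeas_nu: "\<forall>x\<in>D. M x \<in> borel_measurable \<nu>"
    and Mmeas_mu: "\<forall>x\<in>D. M x \<in> borel_measurable \<mu>"
    and nu: "finite_measure \<nu>" "space \<nu> = frontier D"
            "sets \<nu> = sets (restrict_space borel (frontier D))"
    and v: "\<forall>x\<in>D. v x = (\<integral>z. M x z \<partial>\<nu>)"
    and mu: "finite_measure \<mu>" "space \<mu> = frontier D"
            "sets \<mu> = sets (restrict_space borel (frontier D))"
    and Q: "Q \<in> frontier D"
  shows
    "(((\<lambda>x. dist_compl D x / v x) \<longlongrightarrow> 0) (at Q within D) \<longrightarrow>
       (\<forall>\<epsilon>>0. ((\<lambda>x. (\<integral>z. indicator {z. \<epsilon> \<le> dist Q z} z * M x z \<partial>\<mu>) / v x)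
                  \<longlongrightarrow> 0) (at Q within D)))
     \<and>
     ((\<forall>\<beta>>1. ((\<lambda>x. dist_compl D x / v x) \<longlongrightarrow> 0) (at Q within nt_region D r0 Q \<beta>)) \<longrightarrow>
       (\<forall>\<epsilon>>0. \<forall>\<beta>>1. ((\<lambda>x. (\<integral>z. indicator {z. \<epsilon> \<le> dist Q z} z * M x z \<partial>\<mu>) / v x)
                  \<longlongrightarrow> 0) (at Q within nt_region D r0 Q \<beta>)))"
proof -
  have nt: "\<And>\<beta>. nt_region D r0 Q \<beta> \<subseteq> D" unfolding nt_region_def by auto
  show ?thesis
    using key[OF Mest Mmeas_mu nu(2) v mu(1) mu(2) mu(3) order_refl]
          key[OF Mest Mmeas_mu nu(2) v mu(1) mu(2) mu(3) nt] by blast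
qed

end
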